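(* Let $G$ be a finite simple graph, $P$ a pebble distribution, and $U$ a unit distribution of nonzero size on a vertex $u$, disjoint from $P$. Let $c$ be a cooperation vertex such that, under $P+U$, a pebbling move removing pebbles from $c$ can be made after some pebbling sequence (i.e. $c$ is $2$-reachable under $P+U$). Then either $c$ has two neighbors $e,f$ each with cooperation excess at least $1$ and with $M(e)<M(c)$, $M(f)<M(c)$, or $c$ has a neighbor $d$ with cooperation excess at least $3$ and $M(d)<M(c)$.
   Context: A pebble distribution is a function $V(G)\to\mathbb{Z}_{\geq0}$; $(P+U)(v)=P(v)+U(v)$. A pebbling move removes two pebbles from a vertex and adds one to an adjacent vertex; a pebbling sequence is an executable sequence of moves, and $(P+U)_\sigma$ is the result of applying $\sigma$. A vertex $v$ is $k$-reachable under a distribution if some pebbling sequence yields at least $k$ pebbles on $v$; reachable means $1$-reachable. $\mathrm{reach}(P,v)$ is the largest such $k$; $\mathrm{exc}(P,v)=\mathrm{reach}(P,v)-1$ if $v$ is reachable, else $0$. A cooperation vertex is reachable under $P+U$ but under neither $P$ nor $U$. The cooperation excess of $v$ is $\mathrm{exc}(P+U,v)-\mathrm{exc}(P,v)-\mathrm{exc}(U,v)$. A vertex is utilized by a pebbling sequence if some move of it removes or adds a pebble at that vertex. $M(v)$ is the minimum, over pebbling sequences $\sigma$ from $P+U$ with $(P+U)_\sigma(v)\geq 2$, of the number of cooperation vertices utilized by $\sigma$ (counting $v$ if it is a cooperation vertex); $M(v)=\infty$ if $v$ is not $2$-reachable under $P+U$. *)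

theory Defs
  imports Main "HOL-Library.Extended_Nat"
begin

definition simple_graph :: "'a set \<Rightarrow> ('a \<Rightarrow> 'a \<Rightarrow> bool) \<Rightarrow> bool" where
  "simple_graph V E \<longleftrightarrow> finite V \<and> (\<forall>x y. E x y \<longrightarrow> x \<in> V \<and> y \<in> V)
     \<and> (\<forall>x y. E x y \<longrightarrow> E y x) \<and> (\<forall>x. \<not> E x x)"

definition dist_on :: "'a set \<Rightarrow> ('a \<Rightarrow> nat) \<Rightarrow> bool" where
  "dist_on V P \<longleftrightarrow> (\<forall>x. x \<notin> V \<longrightarrow> P x = 0)"

definition dplus :: "('a \<Rightarrow> nat) \<Rightarrow> ('a \<Rightarrow> nat) \<Rightarrow> ('a \<Rightarrow> nat)" where
  "dplus P U = (\<lambda>v. P v + U v)"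

definition move :: "('a \<Rightarrow> nat) \<Rightarrow> 'a \<Rightarrow> 'a \<Rightarrow> ('a \<Rightarrow> nat)" where
  "move P x y = (let Q = P(x := P x - 2) in Q(y := Q y + 1))"

fun valid_seq :: "('a \<Rightarrow> 'a \<Rightarrow> bool) \<Rightarrow> ('a \<Rightarrow> nat) \<Rightarrow> ('a \<times> 'a) list \<Rightarrow> bool" where
  "valid_seq E P [] = True"
| "valid_seq E P ((x, y) # \<sigma>) = (E x y \<and> 2 \<le> P x \<and> valid_seq E (move P x y) \<sigma>)"

fun apply_seq :: "('a \<Rightarrow> nat) \<Rightarrow> ('a \<times> 'a) list \<Rightarrow> ('a \<Rightarrow> nat)" where
  "apply_seq P [] = P"
| "apply_seq P ((x, y) # \<sigma>) = apply_seq (move P x y) \<sigma>"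

definition k_reachable :: "('a \<Rightarrow> 'a \<Rightarrow> bool) \<Rightarrow> ('a \<Rightarrow> nat) \<Rightarrow> 'a \<Rightarrow> nat \<Rightarrow> bool" where
  "k_reachable E P v k \<longleftrightarrow> (\<exists>\<sigma>. valid_seq E P \<sigma> \<and> k \<le> apply_seq P \<sigma> v)"

abbreviation reachable :: "('a \<Rightarrow> 'a \<Rightarrow> bool) \<Rightarrow> ('a \<Rightarrow> nat) \<Rightarrow> 'a \<Rightarrow> bool" where
  "reachable E P v \<equiv> k_reachable E P v 1"

definition reach :: "('a \<Rightarrow> 'a \<Rightarrow> bool) \<Rightarrow> ('a \<Rightarrow> nat) \<Rightarrow> 'a \<Rightarrow> nat" where
  "reach E P v = (GREATEST k. k_reachable E P v k)"

definition exc :: "('a \<Rightarrow> 'a \<Rightarrow> bool) \<Rightarrow> ('a \<Rightarrow> nat) \<Rightarrow> 'a \<Rightarrow> nat" where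
  "exc E P v = (if reachable E P v then reach E P v - 1 else 0)"

definition coop_vertex :: "('a \<Rightarrow> 'a \<Rightarrow> bool) \<Rightarrow> ('a \<Rightarrow> nat) \<Rightarrow> ('a \<Rightarrow> nat) \<Rightarrow> 'a \<Rightarrow> bool" where
  "coop_vertex E P U v \<longleftrightarrow> reachable E (dplus P U) v \<and> \<not> reachable E P v \<and> \<not> reachable E U v"

definition coop_excess :: "('a \<Rightarrow> 'a \<Rightarrow> bool) \<Rightarrow> ('a \<Rightarrow> nat) \<Rightarrow> ('a \<Rightarrow> nat) \<Rightarrow> 'a \<Rightarrow> int" where
  "coop_excess E P U v = int (exc E (dplus P U) v) - int (exc E P v) - int (exc E U v)"

definition utilized :: "('a \<times> 'a) list \<Rightarrow> 'a \<Rightarrow> bool" where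
  "utilized \<sigma> w \<longleftrightarrow> (\<exists>(x, y) \<in> set \<sigma>. w = x \<or> w = y)"

definition coop_used :: "('a \<Rightarrow> 'a \<Rightarrow> bool) \<Rightarrow> ('a \<Rightarrow> nat) \<Rightarrow> ('a \<Rightarrow> nat) \<Rightarrow> 'a \<Rightarrow> ('a \<times> 'a) list \<Rightarrow> nat" where
  "coop_used E P U v \<sigma> = card {w. coop_vertex E P U w \<and> (utilized \<sigma> w \<or> w = v)}"

definition Mval :: "('a \<Rightarrow> 'a \<Rightarrow> bool) \<Rightarrow> ('a \<Rightarrow> nat) \<Rightarrow> ('a \<Rightarrow> nat) \<Rightarrow> 'a \<Rightarrow> enat" where
  "Mval E P U v = (if k_reachable E (dplus P U) v 2
     then enat (LEAST n. \<exists>\<sigma>. valid_seq E (dplus P U) \<sigma> \<and> 2 \<le> apply_seq (dplus P U) \<sigma> v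
                          \<and> coop_used E P U v \<sigma> = n)
     else \<infinity>)"

end

theory Submission
  imports Defs
begin

lemma apply_append: "apply_seq Q (\<sigma> @ \<tau>) = apply_seq (apply_seq Q \<sigma>) \<tau>"
  by (induction Q \<sigma> rule: apply_seq.induct) auto

lemma valid_append: "valid_seq E Q (\<sigma> @ \<tau>) = (valid_seq E Q \<sigma> \<and> valid_seq E (apply_seq Q \<sigma>) \<tau>)"
  by (induction E Q \<sigma> rule: valid_seq.induct) auto

lemma move_int: "2 \<le> Q x \<Longrightarrow> int (move Q x y w) = int (Q w) - (if w = x then 2 else 0) + (if w = y then 1 else 0)"
  by (auto simp: move_def Let_def)

lemma shift:
  "valid_seq E Q \<sigma> \<Longrightarrow> (\<forall>p\<in>set \<sigma>. fst p \<noteq> c) \<Longrightarrow> (\<forall>w. w \<noteq> c \<longrightarrow> Q w \<le> R w)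
   \<Longrightarrow> valid_seq E R \<sigma> \<and> (\<forall>w. int (apply_seq R \<sigma> w) - int (apply_seq Q \<sigma> w) = int (R w) - int (Q w))"
proof (induction \<sigma> arbitrary: Q R)
  case Nil
  then show ?case by simp
next
  case (Cons p \<sigma>)
  obtain x y where p: "p = (x, y)" by fastforce
  have xc: "x \<noteq> c" using Cons.prems p by auto
  have Qx: "2 \<le> Q x" "E x y" "valid_seq E (move Q x y) \<sigma>" using Cons.prems p by auto
  have Rx: "2 \<le> R x" using Qx xc Cons.prems(3) by force
  have d: "int (move R x y w) - int (move Q x y w) = int (R w) - int (Q w)" for w
    using move_int[of Q x y w, OF Qx(1)] move_int[of R x y w, OF Rx] by simp
  have le: "\<forall>w. w \<noteq> c \<longrightarrow> move Q x y w \<le> move R x y w"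
  proof (intro allI impI)
    fix w assume "w \<noteq> c"
    then have "Q w \<le> R w" using Cons.prems(3) by auto
    then show "move Q x y w \<le> move R x y w" using d[of w] by linarith
  qed
  have IH: "valid_seq E (move R x y) \<sigma> \<and> (\<forall>w. int (apply_seq (move R x y) \<sigma> w) - int (apply_seq (move Q x y) \<sigma> w) = int (move R x y w) - int (move Q x y w))"
    using Cons.IH[OF Qx(3) _ le] Cons.prems(2) by auto
  show ?case using IH d p Qx Rx by simp
qed

lemma count_c: "(\<forall>p\<in>set \<sigma>. fst p \<noteq> c) \<Longrightarrow> apply_seq Q \<sigma> c = Q c + length (filter (\<lambda>p. snd p = c) \<sigma>)"
  by (induction Q \<sigma> rule: apply_seq.induct) (auto simp: move_def Let_def)

lemma no_source:
  "valid_seq E Q \<tau> \<Longrightarrow> (\<forall>n\<le>length \<tau>. apply_seq Q (take n \<tau>) c < 2) \<Longrightarrow> \<forall>p\<in>set \<tau>. fst p \<noteq> c"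
proof (induction \<tau> arbitrary: Q)
  case Nil
  then show ?case by simp
next
  case (Cons p \<tau>)
  obtain x y where p: "p = (x, y)" by fastforce
  have v: "2 \<le> Q x" "valid_seq E (move Q x y) \<tau>" using Cons.prems p by auto
  have "apply_seq Q (take 0 (p # \<tau>)) c < 2" using Cons.prems(2) by blast
  then have "x \<noteq> c" using v by auto
  moreover have "\<forall>n\<le>length \<tau>. apply_seq (move Q x y) (take n \<tau>) c < 2"
  proof (intro allI impI)
    fix n assume "n \<le> length \<tau>"
    then have "apply_seq Q (take (Suc n) (p # \<tau>)) c < 2" using Cons.prems(2) by (metis Suc_le_mono length_Cons)
    then show "apply_seq (move Q x y) (take n \<tau>) c < 2" using p by simp
  qed
  ultimately show ?case using Cons.IH[OF v(2)] p by auto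
qed

lemma move_dist: "simple_graph V E \<Longrightarrow> dist_on V Q \<Longrightarrow> E x y \<Longrightarrow> dist_on V (move Q x y)"
  by (auto simp: dist_on_def move_def Let_def simple_graph_def)

lemma outside: "simple_graph V E \<Longrightarrow> dist_on V Q \<Longrightarrow> valid_seq E Q \<sigma> \<Longrightarrow> w \<notin> V \<Longrightarrow> apply_seq Q \<sigma> w = 0"
proof (induction \<sigma> arbitrary: Q)
  case Nil
  then show ?case by (simp add: dist_on_def)
next
  case (Cons p \<sigma>)
  obtain x y where p: "p = (x, y)" by fastforce
  show ?case using Cons p move_dist[of V E Q x y] by auto
qed

lemma move_sum:
  assumes "simple_graph V E" "E x y" "2 \<le> Q x"
  shows "sum (move Q x y) V \<le> sum Q V"
proof -
  have fin: "finite V" and xy: "x \<in> V" "y \<in> V" using assms by (auto simp: simple_graph_def)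
  have "int (sum (move Q x y) V) = (\<Sum>w\<in>V. int (Q w) - (if w = x then 2 else 0) + (if w = y then 1 else 0))"
    using move_int[of Q x y, OF assms(3)] by (simp add: of_nat_sum)
  also have "\<dots> = (\<Sum>w\<in>V. int (Q w)) - (\<Sum>w\<in>V. (if w = x then 2 else 0)) + (\<Sum>w\<in>V. (if w = y then 1 else 0))"
    by (simp add: sum.distrib sum_subtractf)
  also have "\<dots> = int (sum Q V) - 1"
    using fin xy by (simp add: of_nat_sum)
  finally show ?thesis by linarith
qed

lemma bound: "simple_graph V E \<Longrightarrow> dist_on V Q \<Longrightarrow> valid_seq E Q \<sigma> \<Longrightarrow> apply_seq Q \<sigma> w \<le> sum Q V"
proof (induction \<sigma> arbitrary: Q)
  case Nil
  show ?case
  proof (cases "w \<in> V")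
    case True
    then show ?thesis using Nil by (auto simp: simple_graph_def intro: member_le_sum)
  next
    case False
    then show ?thesis using Nil by (simp add: dist_on_def)
  qed
next
  case (Cons p \<sigma>)
  obtain x y where p: "p = (x, y)" by fastforce
  have "apply_seq (move Q x y) \<sigma> w \<le> sum (move Q x y) V"
    using Cons p move_dist[of V E Q x y] by auto
  then show ?case using move_sum[of V E x y Q] Cons.prems p by auto
qed

lemma kr_mono: "k_reachable E Q v j \<Longrightarrow> i \<le> j \<Longrightarrow> k_reachable E Q v i"
  unfolding k_reachable_def by auto

lemma exc_zero: "\<not> k_reachable E Q v 2 \<Longrightarrow> exc E Q v = 0"
proof -
  assume a: "\<not> k_reachable E Q v 2"
  have b: "k_reachable E Q v j \<Longrightarrow> j \<le> 1" for j using a kr_mono[of E Q v j 2] by force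
  have "k_reachable E Q v 0" unfolding k_reachable_def by (rule exI[of _ "[]"]) simp
  then have "k_reachable E Q v (reach E Q v)" unfolding reach_def using b by (rule GreatestI_nat)
  then have "reach E Q v \<le> 1" using b by blast
  then show ?thesis by (simp add: exc_def)
qed

lemma exc_ge: "(\<And>j. k_reachable E Q v j \<Longrightarrow> j \<le> B) \<Longrightarrow> k_reachable E Q v j \<Longrightarrow> 1 \<le> j \<Longrightarrow> j - 1 \<le> exc E Q v"
proof -
  assume b: "\<And>j. k_reachable E Q v j \<Longrightarrow> j \<le> B" and r: "k_reachable E Q v j" and j: "1 \<le> j"
  have "j \<le> reach E Q v" unfolding reach_def using r b by (rule Greatest_le_nat)
  moreover have "reachable E Q v" using kr_mono[OF r j] .
  ultimately show ?thesis by (simp add: exc_def)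
qed

lemma step_reach: "k_reachable E Q t 2 \<Longrightarrow> E t c \<Longrightarrow> reachable E Q c"
proof -
  assume "k_reachable E Q t 2" "E t c"
  then obtain \<sigma> where s: "valid_seq E Q \<sigma>" "2 \<le> apply_seq Q \<sigma> t" unfolding k_reachable_def by blast
  have "valid_seq E Q (\<sigma> @ [(t, c)])" using s \<open>E t c\<close> by (simp add: valid_append)
  moreover have "1 \<le> apply_seq Q (\<sigma> @ [(t, c)]) c" by (simp add: apply_append move_def Let_def)
  ultimately show ?thesis unfolding k_reachable_def by blast
qed

lemma main:
  assumes G: "simple_graph V E" and PV: "dist_on V P" and UV: "dist_on V U"
    and coop: "coop_vertex E P U c"
    and c2: "k_reachable E (dplus P U) c 2"
  shows "(\<exists>e f. e \<noteq> f \<and> E c e \<and> E c f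
            \<and> coop_excess E P U e \<ge> 1 \<and> coop_excess E P U f \<ge> 1
            \<and> Mval E P U e < Mval E P U c \<and> Mval E P U f < Mval E P U c)
       \<or> (\<exists>d. E c d \<and> coop_excess E P U d \<ge> 3 \<and> Mval E P U d < Mval E P U c)"
proof -
  define Q where "Q = dplus P U"
  have QV: "dist_on V Q" using PV UV by (simp add: Q_def dplus_def dist_on_def)
  have sym: "\<And>x y. E x y \<Longrightarrow> E y x" and irr: "\<And>x. \<not> E x x"
    and fin: "finite V" using G by (auto simp: simple_graph_def)
  have nP: "\<not> reachable E P c" and nU: "\<not> reachable E U c" and rQ: "reachable E Q c"
    using coop by (auto simp: coop_vertex_def Q_def)
  have emp: "valid_seq E R []" "apply_seq R [] = R" for R by auto
  have "P c = 0"
  proof (rule ccontr)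
    assume "P c \<noteq> 0" then have "reachable E P c" unfolding k_reachable_def
      by (intro exI[of _ "[]"]) simp
    with nP show False by simp
  qed
  moreover have "U c = 0"
  proof (rule ccontr)
    assume "U c \<noteq> 0" then have "reachable E U c" unfolding k_reachable_def
      by (intro exI[of _ "[]"]) simp
    with nU show False by simp
  qed
  ultimately have Qc: "Q c = 0" by (simp add: Q_def dplus_def)
  have coopV: "w \<in> V" if "coop_vertex E P U w" for w
  proof (rule ccontr)
    assume "w \<notin> V"
    from that obtain \<sigma> where "valid_seq E Q \<sigma>" "1 \<le> apply_seq Q \<sigma> w"
      unfolding coop_vertex_def k_reachable_def Q_def by blast
    with outside[OF G QV _ \<open>w \<notin> V\<close>] show False by fastforce
  qed
  define S where "S \<rho> t = {w. coop_vertex E P U w \<and> (utilized \<rho> w \<or> w = t)}" for \<rho> t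
  have finS: "finite (S \<rho> t)" for \<rho> t
    using coopV fin by (auto simp: S_def intro: finite_subset)
  have cu: "coop_used E P U t \<rho> = card (S \<rho> t)" for \<rho> t by (simp add: coop_used_def S_def)
  define m where "m = (LEAST n. \<exists>\<sigma>. valid_seq E Q \<sigma> \<and> 2 \<le> apply_seq Q \<sigma> c \<and> coop_used E P U c \<sigma> = n)"
  have Mc: "Mval E P U c = enat m" using c2 by (simp add: Mval_def m_def Q_def)
  obtain \<sigma>0 where s0: "valid_seq E Q \<sigma>0" "2 \<le> apply_seq Q \<sigma>0 c"
    using c2 unfolding k_reachable_def Q_def by blast
  have "\<exists>n \<sigma>. valid_seq E Q \<sigma> \<and> 2 \<le> apply_seq Q \<sigma> c \<and> coop_used E P U c \<sigma> = n"
    using s0 by blast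
  then have "\<exists>\<sigma>. valid_seq E Q \<sigma> \<and> 2 \<le> apply_seq Q \<sigma> c \<and> coop_used E P U c \<sigma> = m"
    unfolding m_def by (rule LeastI_ex)
  then obtain \<sigma>1 where s1: "valid_seq E Q \<sigma>1 \<and> 2 \<le> apply_seq Q \<sigma>1 c \<and> coop_used E P U c \<sigma>1 \<le> m"
    by force
  define Good where "Good \<sigma> \<longleftrightarrow> valid_seq E Q \<sigma> \<and> 2 \<le> apply_seq Q \<sigma> c \<and> coop_used E P U c \<sigma> \<le> m" for \<sigma>
  have "Good \<sigma>1" using s1 by (simp add: Good_def)
  then obtain \<sigma> where gs: "Good \<sigma>" and minl: "\<And>\<sigma>'. Good \<sigma>' \<Longrightarrow> length \<sigma> \<le> length \<sigma>'"
    using ex_has_least_nat[of Good \<sigma>1 length] by blast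
  have vs: "valid_seq E Q \<sigma>" and cs: "card (S \<sigma> c) \<le> m" using gs by (auto simp: Good_def cu)
  have utl_sub: "utilized \<rho> w \<Longrightarrow> set \<rho> \<subseteq> set \<sigma>' \<Longrightarrow> utilized \<sigma>' w" for \<rho> \<sigma>' w
    unfolding utilized_def by blast
  have pref: "apply_seq Q (take n \<sigma>) c < 2" if "n < length \<sigma>" for n
  proof (rule ccontr)
    assume a: "\<not> ?thesis"
    have "valid_seq E Q (take n \<sigma>)" using vs valid_append[of E Q "take n \<sigma>" "drop n \<sigma>"] by simp
    moreover have "S (take n \<sigma>) c \<subseteq> S \<sigma> c" unfolding S_def using utl_sub[of "take n \<sigma>" _ \<sigma>]
      set_take_subset[of n \<sigma>] by blast
    then have "card (S (take n \<sigma>) c) \<le> card (S \<sigma> c)" using finS by (simp add: card_mono)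
    ultimately have "Good (take n \<sigma>)" using a cs by (simp add: Good_def cu)
    then show False using minl that by fastforce
  qed
  have "\<sigma> \<noteq> []" using gs Qc by (auto simp: Good_def)
  then obtain \<tau> f g where sig: "\<sigma> = \<tau> @ [(f, g)]" by (metis rev_exhaust surj_pair)
  define D where "D = apply_seq Q \<tau>"
  have vt: "valid_seq E Q \<tau>" and Efg: "E f g" and Df: "2 \<le> D f"
    using vs sig by (auto simp: valid_append D_def)
  have Dc: "D c < 2" using pref[of "length \<tau>"] sig by (simp add: D_def)
  have mc: "2 \<le> move D f g c" using gs sig by (simp add: Good_def apply_append D_def)
  have gc: "g = c"
  proof (rule ccontr)
    assume "g \<noteq> c" then have "move D f g c \<le> D c" by (auto simp: move_def Let_def)
    then show False using mc Dc by simp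
  qed
  have fc: "f \<noteq> c" using irr Efg gc by blast
  have Dc1: "D c = 1" using mc Dc gc fc by (simp add: move_def Let_def)
  have tpref: "\<forall>n\<le>length \<tau>. apply_seq Q (take n \<tau>) c < 2"
  proof (intro allI impI)
    fix n assume "n \<le> length \<tau>"
    then have "take n \<tau> = take n \<sigma>" "n < length \<sigma>" using sig by auto
    then show "apply_seq Q (take n \<tau>) c < 2" using pref by simp
  qed
  have nsrc: "\<forall>p\<in>set \<tau>. fst p \<noteq> c" using no_source[OF vt tpref] .
  have cnt: "length (filter (\<lambda>p. snd p = c) \<tau>) = 1"
    using count_c[OF nsrc, of Q] Dc1 Qc by (simp add: D_def)
  then have "filter (\<lambda>p. snd p = c) \<tau> \<noteq> []" by auto
  then have "\<exists>p\<in>set \<tau>. snd p = c" unfolding filter_empty_conv by blast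
  then obtain \<alpha> p \<beta> where tau: "\<tau> = \<alpha> @ p # \<beta>" and pc: "snd p = c" and na: "\<forall>q\<in>set \<alpha>. snd q \<noteq> c"
    using split_list_first_prop[of \<tau> "\<lambda>p. snd p = c"] by blast
  obtain e where p: "p = (e, c)" using pc by (metis prod.collapse)
  have "filter (\<lambda>p. snd p = c) \<alpha> = []" using na by (simp add: filter_empty_conv)
  then have "filter (\<lambda>p. snd p = c) \<beta> = []" using cnt tau pc by simp
  then have nb: "\<forall>q\<in>set \<beta>. snd q \<noteq> c" by (simp add: filter_empty_conv)
  define D0 where "D0 = apply_seq Q \<alpha>"
  define D1 where "D1 = move D0 e c"
  have va: "valid_seq E Q \<alpha>" and Eec: "E e c" and D0e: "2 \<le> D0 e" and vb: "valid_seq E D1 \<beta>"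
    using vt tau p by (auto simp: valid_append D0_def D1_def)
  have ec: "e \<noteq> c" using irr Eec by blast
  have DD: "D = apply_seq D1 \<beta>" using tau p by (simp add: D_def apply_append D0_def D1_def)
  have nsb: "\<forall>q\<in>set \<beta>. fst q \<noteq> c" using nsrc tau by auto
  have nsa: "\<forall>q\<in>set \<alpha>. fst q \<noteq> c" using nsrc tau by auto
  have le01: "\<forall>w. w \<noteq> c \<longrightarrow> D1 w \<le> D0 w" by (auto simp: D1_def move_def Let_def)
  from shift[OF vb nsb le01] have vb0: "valid_seq E D0 \<beta>"
    and dif: "\<And>w. int (apply_seq D0 \<beta> w) - int (apply_seq D1 \<beta> w) = int (D0 w) - int (D1 w)" by auto
  define D' where "D' = apply_seq Q (\<alpha> @ \<beta>)"
  have D'eq: "D' = apply_seq D0 \<beta>" by (simp add: D'_def apply_append D0_def)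
  have vab: "valid_seq E Q (\<alpha> @ \<beta>)" using va vb0 by (simp add: valid_append D0_def)
  have D'f: "2 \<le> D' f" using dif[of f] le01 fc Df DD D'eq by force
  have D'e: "e = f \<Longrightarrow> 4 \<le> D' f" using dif[of e] ec Df DD D'eq D0e by (simp add: D1_def move_def Let_def)
  have ucs: "utilized \<sigma> c" using sig gc unfolding utilized_def by auto
  have Mlt: "Mval E P U t < Mval E P U c"
    if v: "valid_seq E Q \<rho>" and r2: "2 \<le> apply_seq Q \<rho> t" and sub: "set \<rho> \<subseteq> set \<sigma>"
      and nc: "\<not> utilized \<rho> c" and ut: "utilized \<sigma> t" and tc: "t \<noteq> c" for \<rho> t
  proof -
    have "S \<rho> t \<subseteq> S \<sigma> c - {c}" unfolding S_def using utl_sub[OF _ sub] ut nc tc by blast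
    moreover have "c \<in> S \<sigma> c" using coop by (simp add: S_def Q_def)
    ultimately have "S \<rho> t \<subset> S \<sigma> c" by blast
    then have "card (S \<rho> t) < card (S \<sigma> c)" using finS by (rule psubset_card_mono[rotated])
    moreover have "k_reachable E (dplus P U) t 2" using v r2 unfolding k_reachable_def Q_def by blast
    moreover have "(LEAST n. \<exists>\<sigma>. valid_seq E (dplus P U) \<sigma> \<and> 2 \<le> apply_seq (dplus P U) \<sigma> t
                          \<and> coop_used E P U t \<sigma> = n) \<le> card (S \<rho> t)"
      by (rule Least_le) (use v r2 cu in \<open>auto simp: Q_def\<close>)
    ultimately show ?thesis using Mc cs by (simp add: Mval_def)
  qed
  have Exc: "coop_excess E P U t \<ge> int j - 1"
    if "E t c" "k_reachable E Q t j" "1 \<le> j" for t j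
  proof -
    have "\<not> k_reachable E P t 2" using step_reach[of E P t c] nP that(1) by blast
    then have "exc E P t = 0" by (rule exc_zero)
    moreover have "\<not> k_reachable E U t 2" using step_reach[of E U t c] nU that(1) by blast
    then have "exc E U t = 0" by (rule exc_zero)
    moreover have bd: "i \<le> sum Q V" if kr: "k_reachable E Q t i" for i
    proof -
      obtain \<rho> where "valid_seq E Q \<rho>" "i \<le> apply_seq Q \<rho> t" using kr unfolding k_reachable_def by blast
      then show ?thesis using bound[OF G QV, of \<rho> t] by linarith
    qed
    have "j - 1 \<le> exc E Q t"
      by (rule exc_ge[of E Q t "sum Q V", OF bd that(2,3)])
    ultimately show ?thesis using that(3) by (simp add: coop_excess_def Q_def)
  qed
  have nua: "\<not> utilized \<alpha> c" using nsa na unfolding utilized_def by fastforce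
  have nuab: "\<not> utilized (\<alpha> @ \<beta>) c" using nsa na nsb nb unfolding utilized_def by fastforce
  have ue: "utilized \<sigma> e" using sig tau p unfolding utilized_def by force
  have uf: "utilized \<sigma> f" using sig unfolding utilized_def by force
  have Me: "Mval E P U e < Mval E P U c"
    by (rule Mlt[OF va _ _ nua ue ec]) (use D0e sig tau in \<open>auto simp: D0_def\<close>)
  have Mf: "Mval E P U f < Mval E P U c"
    by (rule Mlt[OF vab _ _ nuab uf fc]) (use D'f sig tau in \<open>auto simp: D'_def\<close>)
  have kre: "k_reachable E Q e 2" using va D0e unfolding k_reachable_def D0_def by blast
  have krf: "k_reachable E Q f 2" using vab D'f unfolding k_reachable_def D'_def by blast
  have Efc: "E f c" using Efg gc by simp
  show ?thesis
  proof (cases "e = f")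
    case True
    have "k_reachable E Q e 4" using vab D'e[OF True] True unfolding k_reachable_def D'_def by blast
    then have "coop_excess E P U e \<ge> 3" using Exc[OF Eec, of 4] by simp
    then show ?thesis using Me sym[OF Eec] by blast
  next
    case False
    have "coop_excess E P U e \<ge> 1" "coop_excess E P U f \<ge> 1"
      using Exc[OF Eec kre] Exc[OF Efc krf] by simp_all
    then show ?thesis using False Me Mf sym[OF Eec] sym[OF Efc] by blast
  qed
qed

theorem claim3p5:
  fixes V :: "'a set" and E :: "'a \<Rightarrow> 'a \<Rightarrow> bool" and P :: "'a \<Rightarrow> nat"
    and u c :: 'a and k :: nat
  assumes "simple_graph V E"
    and "dist_on V P"
    and "u \<in> V" and "k > 0"
    and "P u = 0"
    and "coop_vertex E P (\<lambda>x. if x = u then k else 0) c"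
    and "k_reachable E (dplus P (\<lambda>x. if x = u then k else 0)) c 2"
  shows "(\<exists>e f. e \<noteq> f \<and> E c e \<and> E c f
            \<and> coop_excess E P (\<lambda>x. if x = u then k else 0) e \<ge> 1
            \<and> coop_excess E P (\<lambda>x. if x = u then k else 0) f \<ge> 1
            \<and> Mval E P (\<lambda>x. if x = u then k else 0) e < Mval E P (\<lambda>x. if x = u then k else 0) c
            \<and> Mval E P (\<lambda>x. if x = u then k else 0) f < Mval E P (\<lambda>x. if x = u then k else 0) c)
       \<or> (\<exists>d. E c d \<and> coop_excess E P (\<lambda>x. if x = u then k else 0) d \<ge> 3
            \<and> Mval E P (\<lambda>x. if x = u then k else 0) d < Mval E P (\<lambda>x. if x = u then k else 0) c)"
  by (rule main[OF assms(1,2) _ assms(6,7)]) (use assms(3) in \<open>auto simp: dist_on_def\<close>)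

end
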